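(* For every prime power $q$ and every integer $n\ge1$, $$\sum_{\lambda\vdash n}\frac{\prod_{s=1}^{\ell(\lambda)-1}(1-q^s)}{a_\lambda(q)}=\frac{1}{q^n-1}.$$
   Context: The sum runs over all partitions $\lambda=(\lambda_1\ge\dots\ge\lambda_m\ge1)$ of $n$; $\ell(\lambda)=m$ is the length; empty products equal $1$. Writing $t_i$ for the number of parts of $\lambda$ equal to $i$, $|\lambda|=\sum_i\lambda_i$ and $n(\lambda)=\sum_{i=1}^{m}(i-1)\lambda_i$, one sets $a_\lambda(q)=q^{|\lambda|+2n(\lambda)}\prod_{i\ge1}\prod_{j=1}^{t_i}(1-q^{-j})$; this equals the order of the automorphism group of the $\mathbb F_q[T]$-module $\bigoplus_{i=1}^m\mathbb F_q[T]/(T^{\lambda_i})$. *)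

theory Defs
  imports Complex_Main "HOL-Computational_Algebra.Primes"
begin

definition partitions_of :: "nat \<Rightarrow> nat list set" where
  "partitions_of n = {xs. sorted_wrt (\<ge>) xs \<and> (\<forall>x\<in>set xs. 0 < x) \<and> sum_list xs = n}"

text \<open>n(lambda) = sum_{i=1}^m (i-1) lambda_i (0-based index i here).\<close>
definition n_part :: "nat list \<Rightarrow> nat" where
  "n_part xs = (\<Sum>i<length xs. i * xs ! i)"

text \<open>a_lambda(q) = q^(|lambda| + 2 n(lambda)) * prod_{i>=1} prod_{j=1}^{t_i} (1 - q^(-j)),
  where t_i = number of parts equal to i (parts i not occurring contribute an empty product).\<close>
definition a_part :: "nat list \<Rightarrow> real \<Rightarrow> real" where
  "a_part xs q = q ^ (sum_list xs + 2 * n_part xs) *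
     (\<Prod>i\<in>set xs. \<Prod>j=1..count_list xs i. (1 - 1 / q ^ j))"

end

theory Submission
  imports Defs
begin


definition poch :: "real \<Rightarrow> nat \<Rightarrow> real" where
  "poch x k = (\<Prod>j=1..k. 1 - x^j)"

definition qb :: "real \<Rightarrow> nat \<Rightarrow> nat \<Rightarrow> real" where
  "qb x n k = (if k \<le> n then poch x n / (poch x k * poch x (n-k)) else 0)"

lemma poch_0[simp]: "poch x 0 = 1" by (simp add: poch_def)

lemma poch_Suc: "poch x (Suc k) = poch x k * (1 - x^Suc k)"
  by (simp add: poch_def prod.nat_ivl_Suc')

lemma qb_gt[simp]: "n < k \<Longrightarrow> qb x n k = 0" by (simp add: qb_def)

lemma qb_sym: "k \<le> n \<Longrightarrow> qb x n (n-k) = qb x n k"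
  by (simp add: qb_def mult.commute)

fun tri :: "nat \<Rightarrow> nat" where
  "tri 0 = 0" | "tri (Suc k) = tri k + k"

lemma tri2: "2 * tri m = m * (m - 1)"
proof (induction m)
  case (Suc m) then show ?case by (cases m) (auto simp: algebra_simps)
qed simp

lemma key_frac: "pc \<noteq> 0 \<Longrightarrow> pd \<noteq> 0 \<Longrightarrow> 1-A \<noteq> 0 \<Longrightarrow> 1-D \<noteq> 0 \<Longrightarrow>
       pa*(1-D*A)/(pc*(1-A)*(pd*(1-D))) = D*(pa/(pc*(pd*(1-D)))) + pa/(pc*(1-A)*(pd::real))"
proof -
  assume a: "pc \<noteq> 0" "pd \<noteq> 0" "1-A \<noteq> 0" "1-D \<noteq> 0"
  have "D*(pa/(pc*(pd*(1-D)))) + pa/(pc*(1-A)*pd) = (D*pa*(1-A) + pa*(1-D))/(pc*(1-A)*(pd*(1-D)))"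
    using a by (simp add: add_divide_distrib)
  also have "D*pa*(1-A) + pa*(1-D) = pa*(1-D*A)" by (simp add: algebra_simps)
  finally show ?thesis by simp
qed

context
  fixes x :: real
  assumes x0: "0 < x" and x1: "x < 1"
begin

lemma xpow_lt1: "x^Suc k < 1" using power_Suc_less_one x0 x1 by blast

lemma poch_pos: "poch x k > 0"
proof (induction k)
  case (Suc k)
  then show ?case using xpow_lt1[of k] by (simp add: poch_Suc del: power_Suc)
qed simp

lemma qb_0[simp]: "qb x n 0 = 1" using poch_pos[of n] by (simp add: qb_def)
lemma qb_nn[simp]: "qb x n n = 1" using poch_pos[of n] by (simp add: qb_def)

lemma qb_pascal:
  assumes "1 \<le> b"
  shows "qb x (Suc a) b = x^(Suc a - b) * qb x a (b-1) + qb x a b"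
proof -
  consider "b = Suc a" | "b \<le> a" | "b > Suc a" by linarith
  then show ?thesis
  proof cases
    case 1 then show ?thesis by simp
  next
    case 3 then show ?thesis by simp
  next
    case 2
    obtain c where c: "b = Suc c" using assms by (cases b) auto
    obtain d where d: "a = Suc c + d" using 2 c le_Suc_ex by blast
    have p: "poch x c > 0" "poch x d > 0" "poch x a > 0" using poch_pos by auto
    have h1: "1 - x^Suc c > 0" "1 - x^Suc d > 0" using xpow_lt1 by auto
    have "Suc a = Suc d + Suc c" using d by simp
    then have e: "x^Suc a = x^Suc d * x^Suc c" by (metis power_add)
    have "qb x (Suc a) b = poch x a * (1 - x^Suc a) / (poch x c * (1 - x^Suc c) * (poch x d * (1 - x^Suc d)))"
      using c d by (simp add: qb_def poch_Suc del: power_Suc)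
    moreover have "qb x a (b-1) = poch x a / (poch x c * (poch x d * (1 - x^Suc d)))"
      using c d by (simp add: qb_def poch_Suc del: power_Suc)
    moreover have "qb x a b = poch x a / (poch x c * (1 - x^Suc c) * poch x d)"
      using c d by (simp add: qb_def poch_Suc del: power_Suc)
    moreover have "Suc a - b = Suc d" using c d by simp
    ultimately show ?thesis using p h1 e
      by (simp only:) (rule key_frac; auto)
  qed
qed

lemma vand_term:
  "x^(M-a) * qb x M a * qb x N (K-a) * x^(Suc a * (N + Suc a - Suc K))
   = x^(M+N-K) * (qb x M a * qb x N (K-a) * x^(a*(N+a-K)))"
proof (cases "a \<le> M \<and> K - a \<le> N")
  case True
  then obtain m' c where mc: "M = a + m'" "N + a = K + c"
    by (metis add.commute le_Suc_ex le_diff_conv)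
  then have "(M-a) + Suc a * (N + Suc a - Suc K) = (M+N-K) + a*(N+a-K)"
    by (simp add: algebra_simps)
  then have "x^(M-a) * x^(Suc a * (N + Suc a - Suc K)) = x^(M+N-K) * x^(a*(N+a-K))"
    by (metis power_add)
  then show ?thesis by (simp add: algebra_simps)
next
  case False
  then show ?thesis by auto
qed

lemma vandermonde:
  "qb x (M+N) K = (\<Sum>a\<le>K. qb x M a * qb x N (K-a) * x^(a*(N+a-K)))"
proof (induction M arbitrary: K)
  case 0
  show ?case
  proof (cases K)
    case 0 then show ?thesis by simp
  next
    case (Suc K') then show ?thesis
      by (simp only: sum.atMost_Suc_shift) simp
  qed
next
  case (Suc M)
  show ?case
  proof (cases K)
    case 0 then show ?thesis by simp
  next
    case (Suc K')
    have "(\<Sum>a\<le>Suc K'. qb x (Suc M) a * qb x N (Suc K' - a) * x^(a*(N+a-Suc K')))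
      = qb x N (Suc K') + (\<Sum>a\<le>K'. qb x (Suc M) (Suc a) * qb x N (K' - a) * x^(Suc a*(N+Suc a-Suc K')))"
      by (simp only: sum.atMost_Suc_shift) simp
    also have "\<dots> = qb x N (Suc K') + (\<Sum>a\<le>K'. qb x M (Suc a) * qb x N (K' - a) * x^(Suc a*(N+Suc a-Suc K')))
        + (\<Sum>a\<le>K'. x^(M-a) * qb x M a * qb x N (K' - a) * x^(Suc a*(N+Suc a-Suc K')))"
      by (simp add: qb_pascal sum.distrib algebra_simps)
    also have "qb x N (Suc K') + (\<Sum>a\<le>K'. qb x M (Suc a) * qb x N (K' - a) * x^(Suc a*(N+Suc a-Suc K')))
       = (\<Sum>a\<le>Suc K'. qb x M a * qb x N (Suc K' - a) * x^(a*(N+a-Suc K')))"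
      by (simp only: sum.atMost_Suc_shift) simp
    also have "\<dots> = qb x (M+N) (Suc K')" using Suc.IH by simp
    also have "(\<Sum>a\<le>K'. x^(M-a) * qb x M a * qb x N (K' - a) * x^(Suc a*(N+Suc a-Suc K')))
       = x^(M+N-K') * (\<Sum>a\<le>K'. qb x M a * qb x N (K' - a) * x^(a*(N+a-K')))"
      by (subst sum_distrib_left) (rule sum.cong[OF refl vand_term])
    also have "\<dots> = x^(M+N-K') * qb x (M+N) K'" using Suc.IH by simp
    finally have "(\<Sum>a\<le>K. qb x (Suc M) a * qb x N (K - a) * x ^ (a * (N + a - K)))
       = qb x (M+N) (Suc K') + x^(M+N-K') * qb x (M+N) K'" using Suc by simp
    moreover have "qb x (Suc M + N) K = x^(M+N-K') * qb x (M+N) K' + qb x (M+N) (Suc K')"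
      using qb_pascal[of "Suc K'" "M+N"] Suc by simp
    ultimately show ?thesis by simp
  qed
qed

lemma gauss_step:
  "(\<Sum>m\<le>Suc n. (-1)^m * x^tri m * qb x (Suc n) m) = (1 - x^n) * (\<Sum>m\<le>n. (-1)^m * x^tri m * qb x n m)"
proof -
  let ?S = "\<Sum>m\<le>n. (-1)^m * x^tri m * qb x n m"
  have "(\<Sum>m\<le>Suc n. (-1)^m * x^tri m * qb x (Suc n) m)
     = 1 + (\<Sum>k\<le>n. (-1)^Suc k * x^tri (Suc k) * qb x (Suc n) (Suc k))"
    by (simp only: sum.atMost_Suc_shift) simp
  also have "\<dots> = 1 + (\<Sum>k\<le>n. (-1)^Suc k * x^tri (Suc k) * qb x n (Suc k))
       + (\<Sum>k\<le>n. (-1)^Suc k * x^tri (Suc k) * (x^(n-k) * qb x n k))"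
    by (simp add: qb_pascal sum.distrib algebra_simps del: power_Suc)
  also have "1 + (\<Sum>k\<le>n. (-1)^Suc k * x^tri (Suc k) * qb x n (Suc k))
     = (\<Sum>m\<le>Suc n. (-1)^m * x^tri m * qb x n m)"
    by (simp only: sum.atMost_Suc_shift) simp
  also have "\<dots> = ?S" by simp
  also have "(\<Sum>k\<le>n. (-1)^Suc k * x^tri (Suc k) * (x^(n-k) * qb x n k)) = - (x^n * ?S)"
  proof -
    have "(-1)^Suc k * x^tri (Suc k) * (x^(n-k) * qb x n k) = - (x^n * ((-1)^k * x^tri k * qb x n k))"
      if "k \<le> n" for k
    proof -
      have "tri (Suc k) + (n-k) = n + tri k" using that by simp
      then have "x^tri (Suc k) * x^(n-k) = x^n * x^tri k" by (metis power_add)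
      then show ?thesis by (simp add: algebra_simps)
    qed
    then have "(\<Sum>k\<le>n. (-1)^Suc k * x^tri (Suc k) * (x^(n-k) * qb x n k))
        = (\<Sum>k\<le>n. - (x^n * ((-1)^k * x^tri k * qb x n k)))"
      by (intro sum.cong) (auto simp del: power_Suc tri.simps)
    then show ?thesis by (simp add: sum_distrib_left sum_negf del: power_Suc tri.simps)
  qed
  finally show ?thesis by (simp add: algebra_simps)
qed

lemma gauss_zero: "1 \<le> n \<Longrightarrow> (\<Sum>m\<le>n. (-1)^m * x^tri m * qb x n m) = 0"
proof (induction n)
  case 0 then show ?case by simp
next
  case (Suc n)
  show ?case
  proof (cases n)
    case 0 then show ?thesis using gauss_step[of 0] by simp
  next
    case (Suc n') then show ?thesis using gauss_step[of n] Suc.IH by simp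
  qed
qed

end


definition pp :: "real \<Rightarrow> nat list \<Rightarrow> real" where
  "pp x xs = (\<Prod>i\<in>set xs. poch x (count_list xs i))"

lemma a_part_eq: "a_part la q = q^(sum_list la + 2*n_part la) * pp (1/q) la"
  by (simp add: a_part_def pp_def poch_def power_one_over)

definition colf :: "nat \<Rightarrow> nat list \<Rightarrow> nat list" where
  "colf m mu = map Suc mu @ replicate (m - length mu) 1"

definition colg :: "nat list \<Rightarrow> nat list" where
  "colg la = map (\<lambda>y. y - 1) (filter (\<lambda>y. 1 < y) la)"

lemma len_le_sum: "\<forall>y\<in>set xs. 0 < (y::nat) \<Longrightarrow> length xs \<le> sum_list xs"
  by (induction xs) auto

lemma finite_partitions: "finite (partitions_of n)"
proof -
  have "partitions_of n \<subseteq> {xs. set xs \<subseteq> {0..n} \<and> length xs \<le> n}"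
    using len_le_sum member_le_sum_list by (fastforce simp: partitions_of_def)
  moreover have "finite {xs. set xs \<subseteq> {0..n} \<and> length xs \<le> n}"
    by (rule finite_lists_length_le) simp
  ultimately show ?thesis by (rule finite_subset)
qed

lemma partitions_0: "partitions_of 0 = {[]}"
  by (auto simp: partitions_of_def) (metis gr_implies_not0 list.set_intros(1) neq_Nil_conv sum_list_eq_0_iff)

lemma part_len: "la \<in> partitions_of n \<Longrightarrow> length la \<le> n"
  using len_le_sum by (auto simp: partitions_of_def)

lemma colg_colf: "\<forall>y\<in>set mu. 0 < y \<Longrightarrow> colg (colf m mu) = mu"
proof -
  assume "\<forall>y\<in>set mu. 0 < y"
  then have "filter (\<lambda>y. 1 < y) (map Suc mu) = map Suc mu" by (auto simp: filter_id_conv)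
  moreover have "filter (\<lambda>y. 1 < y) (replicate r (1::nat)) = []" for r
    by (induction r) auto
  ultimately show ?thesis by (simp add: colg_def colf_def comp_def)
qed

lemma colf_colg: "sorted_wrt (\<ge>) la \<Longrightarrow> \<forall>y\<in>set la. 0 < y \<Longrightarrow> colf (length la) (colg la) = la"
proof (induction la)
  case Nil then show ?case by (simp add: colf_def colg_def)
next
  case (Cons a la)
  show ?case
  proof (cases "1 < a")
    case True
    have "length (filter (\<lambda>y. 1 < y) la) \<le> length la" by (rule length_filter_le)
    then have "colf (length (a # la)) (colg (a # la)) = a # colf (length la) (colg la)"
      using True by (simp add: colf_def colg_def Suc_diff_le)
    then show ?thesis using Cons by simp
  next
    case False
    then have a1: "a = 1" using Cons.prems by auto
    have h: "\<forall>y\<in>set la. y \<le> 1 \<and> 0 < y" using Cons.prems a1 by auto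
    have "y = 1" if "y \<in> set la" for y
    proof -
      have "y \<le> 1" "0 < y" using h that by auto
      then show ?thesis by linarith
    qed
    then have all1: "\<forall>y\<in>set (a#la). y = 1" using a1 by auto
    then have "filter (\<lambda>y. 1 < y) (a#la) = []" by (auto simp: filter_empty_conv)
    then have "colf (length (a # la)) (colg (a # la)) = replicate (length (a#la)) 1"
      by (simp add: colf_def colg_def)
    also have "\<dots> = a # la" using replicate_length_same[OF all1] .
    finally show ?thesis .
  qed
qed

lemma count_replicate: "count_list (replicate r a) b = (if a = b then r else 0)"
  by (induction r) auto

lemma sorted_colf: "sorted_wrt (\<ge>) mu \<Longrightarrow> sorted_wrt (\<ge>) (colf m mu)"
proof -
  assume "sorted_wrt (\<ge>) mu"
  moreover have "sorted_wrt (\<ge>) (replicate r (1::nat))" for r by (induction r) auto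
  ultimately show ?thesis by (auto simp: colf_def sorted_wrt_append sorted_wrt_map)
qed

lemma length_colf: "length mu \<le> m \<Longrightarrow> length (colf m mu) = m"
  by (simp add: colf_def)

lemma sum_colf: "length mu \<le> m \<Longrightarrow> sum_list (colf m mu) = sum_list mu + m"
  by (simp add: colf_def sum_list_Suc sum_list_replicate)

lemma colf_part: "mu \<in> partitions_of N \<Longrightarrow> length mu \<le> m \<Longrightarrow> colf m mu \<in> partitions_of (N+m)"
  using sorted_colf sum_colf by (auto simp: partitions_of_def colf_def)

lemma colg_part:
  assumes "la \<in> partitions_of n"
  shows "colg la \<in> partitions_of (n - length la) \<and> length (colg la) \<le> length la"
proof -
  have s: "sorted_wrt (\<ge>) la" and p: "\<forall>y\<in>set la. 0 < y" and sm: "sum_list la = n"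
    using assms by (auto simp: partitions_of_def)
  have l: "length (colg la) \<le> length la" by (simp add: colg_def length_filter_le)
  have "sum_list la = sum_list (colg la) + length la"
    using sum_colf[OF l] colf_colg[OF s p] by simp
  moreover have "sorted_wrt (\<ge>) (colg la)"
    using s by (auto simp: colg_def sorted_wrt_map intro: sorted_wrt_filter sorted_wrt_mono_rel[of _ "(\<ge>)"])
  moreover have "\<forall>y\<in>set (colg la). 0 < y" by (auto simp: colg_def)
  ultimately show ?thesis using l sm by (auto simp: partitions_of_def)
qed

lemma sum_lessThan_tri: "(\<Sum>i<m. i) = tri m"
  by (induction m) auto

lemma n_part_colf:
  assumes "length mu \<le> m"
  shows "n_part (colf m mu) = n_part mu + tri m"
proof -
  let ?L = "length mu"
  have nth: "colf m mu ! i = (if i < ?L then Suc (mu ! i) else 1)" if "i < m" for i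
    using that assms by (simp add: colf_def nth_append)
  have "n_part (colf m mu) = (\<Sum>i<m. i * colf m mu ! i)"
    using length_colf[OF assms] by (simp add: n_part_def)
  also have "\<dots> = (\<Sum>i<m. (if i < ?L then i * mu ! i else 0) + i)"
    by (rule sum.cong) (auto simp: nth)
  also have "\<dots> = (\<Sum>i<m. (if i < ?L then i * mu ! i else 0)) + (\<Sum>i<m. i)"
    by (simp add: sum.distrib)
  also have "(\<Sum>i<m. (if i < ?L then i * mu ! i else 0)) = (\<Sum>i<?L. i * mu ! i)"
  proof -
    have "(\<Sum>i<m. (if i < ?L then i * mu ! i else 0)) = (\<Sum>i\<in>{..<m} \<inter> {i. i < ?L}. i * mu ! i)"
      by (simp add: sum.inter_restrict)
    also have "{..<m} \<inter> {i. i < ?L} = {..<?L}" using assms by auto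
    finally show ?thesis .
  qed
  finally show ?thesis by (simp add: n_part_def sum_lessThan_tri)
qed

lemma weight_exp_colf:
  assumes "length mu \<le> m"
  shows "sum_list (colf m mu) + 2 * n_part (colf m mu) = sum_list mu + 2 * n_part mu + m * m"
proof -
  have "m * m = m + 2 * tri m" using tri2[of m] by (cases m) auto
  then show ?thesis using sum_colf[OF assms] n_part_colf[OF assms] by simp
qed

lemma pp_colf:
  assumes "\<forall>y\<in>set mu. 0 < y"
  shows "pp x (colf m mu) = poch x (m - length mu) * pp x mu"
proof -
  let ?r = "m - length mu"
  have c1: "count_list (colf m mu) (Suc i) = count_list mu i" if "i \<in> set mu" for i
  proof -
    have "i > 0" using assms that by auto
    then show ?thesis by (simp add: colf_def count_replicate count_list_map_conv)
  qed
  have n1: "1 \<notin> Suc ` set mu" using assms by auto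
  have c0: "count_list (colf m mu) 1 = ?r"
  proof -
    have "1 \<notin> set (map Suc mu)" using n1 by simp
    then show ?thesis by (simp add: colf_def count_replicate)
  qed
  have pr: "(\<Prod>j\<in>Suc ` set mu. poch x (count_list (colf m mu) j)) = pp x mu"
    by (simp add: prod.reindex pp_def c1)
  show ?thesis
  proof (cases "?r = 0")
    case True
    then have "set (colf m mu) = Suc ` set mu" by (simp add: colf_def)
    then show ?thesis using pr True by (simp add: pp_def)
  next
    case False
    then have "set (colf m mu) = insert 1 (Suc ` set mu)" by (auto simp: colf_def)
    then show ?thesis using pr n1 c0 by (simp add: pp_def)
  qed
qed



definition w :: "real \<Rightarrow> nat list \<Rightarrow> real" where "w q la = 1 / a_part la q"

definition Cs :: "real \<Rightarrow> nat \<Rightarrow> nat \<Rightarrow> real" where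
  "Cs q n m = (\<Sum>la\<in>{la\<in>partitions_of n. length la = m}. w q la)"

definition Es :: "real \<Rightarrow> nat \<Rightarrow> nat \<Rightarrow> real" where
  "Es q N M = (\<Sum>mu\<in>{mu\<in>partitions_of N. length mu \<le> M}. w q mu / poch (1/q) (M - length mu))"

lemma w_colf:
  assumes "mu \<in> partitions_of N" "length mu \<le> m"
  shows "w q (colf m mu) = (1/q)^(m*m) * (w q mu / poch (1/q) (m - length mu))"
proof -
  have p: "\<forall>y\<in>set mu. 0 < y" using assms by (auto simp: partitions_of_def)
  show ?thesis
    by (simp add: w_def a_part_eq weight_exp_colf[OF assms(2)] pp_colf[OF p] power_add power_one_over)
qed

lemma C_col:
  assumes "m \<le> n"
  shows "Cs q n m = (1/q)^(m*m) * Es q (n-m) m"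
proof -
  let ?B = "{la\<in>partitions_of n. length la = m}"
  let ?A = "{mu\<in>partitions_of (n-m). length mu \<le> m}"
  have "Cs q n m = (\<Sum>mu\<in>?A. (1/q)^(m*m) * (w q mu / poch (1/q) (m - length mu)))"
    unfolding Cs_def
  proof (rule sum.reindex_bij_witness[where i = "colf m" and j = colg])
    fix a assume a: "a \<in> ?B"
    then have s: "sorted_wrt (\<ge>) a" and p: "\<forall>y\<in>set a. 0 < y"
      by (auto simp: partitions_of_def)
    show "colf m (colg a) = a" using colf_colg[OF s p] a by simp
    show "colg a \<in> ?A" using colg_part[of a n] a by simp
    have "w q (colf m (colg a)) = (1/q)^(m*m) * (w q (colg a) / poch (1/q) (m - length (colg a)))"
      using colg_part[of a n] a by (intro w_colf) auto
    then show "(1/q)^(m*m) * (w q (colg a) / poch (1/q) (m - length (colg a))) = w q a"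
      using colf_colg[OF s p] a by simp
  next
    fix b assume b: "b \<in> ?A"
    then have p: "\<forall>y\<in>set b. 0 < y" by (auto simp: partitions_of_def)
    show "colg (colf m b) = b" using colg_colf[OF p] .
    show "colf m b \<in> ?B" using b colf_part[of b "n-m" m] length_colf[of b m] assms by auto
  qed
  also have "\<dots> = (1/q)^(m*m) * Es q (n-m) m" by (simp add: Es_def sum_distrib_left)
  finally show ?thesis .
qed

lemma C_big: "n < m \<Longrightarrow> Cs q n m = 0"
  using part_len by (fastforce simp: Cs_def intro: sum.neutral)

lemma C_00: "Cs q 0 0 = 1"
  by (simp add: Cs_def partitions_0 w_def a_part_def n_part_def)

lemma C_n0: "1 \<le> n \<Longrightarrow> Cs q n 0 = 0"
  by (auto simp: Cs_def partitions_of_def intro: sum.neutral)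

lemma E_split: "Es q N M = (\<Sum>i\<le>M. Cs q N i / poch (1/q) (M - i))"
proof -
  let ?S = "{mu\<in>partitions_of N. length mu \<le> M}"
  have fS: "finite ?S" using finite_partitions by simp
  have "Es q N M = (\<Sum>i\<le>M. \<Sum>mu\<in>{mu\<in>?S. length mu = i}. w q mu / poch (1/q) (M - length mu))"
    unfolding Es_def by (rule sum.group[symmetric, OF fS]) auto
  also have "\<dots> = (\<Sum>i\<le>M. Cs q N i / poch (1/q) (M - i))"
  proof (rule sum.cong[OF refl])
    fix i assume "i \<in> {..M}"
    then have "{mu\<in>?S. length mu = i} = {la\<in>partitions_of N. length la = i}" by auto
    then show "(\<Sum>mu\<in>{mu\<in>?S. length mu = i}. w q mu / poch (1/q) (M - length mu)) = Cs q N i / poch (1/q) (M - i)"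
      by (simp add: Cs_def sum_divide_distrib)
  qed
  finally show ?thesis .
qed

lemma total_split:
  "(\<Sum>la\<in>partitions_of n. f (length la) * w q la) = (\<Sum>m\<le>n. f m * Cs q n m)"
proof -
  have "(\<Sum>la\<in>partitions_of n. f (length la) * w q la)
     = (\<Sum>m\<le>n. \<Sum>la\<in>{la\<in>partitions_of n. length la = m}. f (length la) * w q la)"
    by (rule sum.group[symmetric, OF finite_partitions]) (auto simp: part_len)
  also have "\<dots> = (\<Sum>m\<le>n. f m * Cs q n m)"
    by (rule sum.cong[OF refl]) (simp add: Cs_def sum_distrib_left)
  finally show ?thesis .
qed

lemma alg2: "A\<noteq>0 \<Longrightarrow> D\<noteq>0 \<Longrightarrow> Em\<noteq>0 \<Longrightarrow> En\<noteq>0 \<Longrightarrow> P*(L*R) = Xn*Xt \<Longrightarrow> sm = -s \<Longrightarrow>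
  (s*P*A)*(L*(R*(B/(D*A))/(A*Em))) = Xn/En * - (sm*Xt*(B*En/(A*Em*(D::real))))"
  by (simp add: field_simps)

lemma alg3: "q \<noteq> 0 \<Longrightarrow> 1 - q^Suc k = - (q^Suc k * (1 - (1/q)^Suc k))" for q :: real
  by (simp add: field_simps)

lemma alg1: "pM \<noteq> 0 \<Longrightarrow> pI \<noteq> 0 \<Longrightarrow> pMi \<noteq> 0 \<Longrightarrow> qM = pM/(pI*pMi) \<Longrightarrow> a*b = c*d \<Longrightarrow>
   a*(b*Q/pI)/pMi = c*(qM*Q*d)/(pM::real)"
  by (simp add: field_simps)

context
  fixes q :: real
  assumes q1: "1 < q"
begin

lemma X0: "0 < 1/q" using q1 by simp
lemma X1: "1/q < 1" using q1 by simp

lemma E_closed: "Es q N M = (1/q)^N * qb (1/q) (N+M-1) N / poch (1/q) M"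
proof (induction N arbitrary: M rule: less_induct)
  case (less N)
  let ?X = "1/q"
  show ?case
  proof (cases "N = 0")
    case True
    have "Es q 0 M = Cs q 0 0 / poch ?X M"
    proof (cases M)
      case 0 then show ?thesis by (simp add: E_split)
    next
      case (Suc M')
      then show ?thesis unfolding E_split by (simp only: sum.atMost_Suc_shift) (simp add: C_big)
    qed
    then show ?thesis using True C_00 qb_0[OF X0 X1] by simp
  next
    case False
    then have N1: "1 \<le> N" by simp
    let ?t = "\<lambda>i. Cs q N i / poch ?X (M - i)"
    let ?u = "\<lambda>a. qb ?X M a * qb ?X (N-1) (N-a) * ?X^(a*(N-1+a-N))"
    have "Es q N M = (\<Sum>i\<le>M. ?t i)" by (rule E_split)
    also have "\<dots> = (\<Sum>i\<le>min M N. ?t i)"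
      by (rule sum.mono_neutral_right) (auto simp: C_big)
    also have "\<dots> = (\<Sum>i\<le>min M N. ?X^N * ?u i / poch ?X M)"
    proof (rule sum.cong[OF refl])
      fix i assume i: "i \<in> {..min M N}"
      show "?t i = ?X^N * ?u i / poch ?X M"
      proof (cases "i = 0")
        case True then show ?thesis using N1 by (simp add: C_n0)
      next
        case False
        then obtain j where j: "i = Suc j" by (cases i) auto
        have iN: "i \<le> N" "i \<le> M" using i by auto
        have "Cs q N i = ?X^(i*i) * Es q (N-i) i" using C_col[OF iN(1)] .
        also have "Es q (N-i) i = ?X^(N-i) * qb ?X (N-1) (N-i) / poch ?X i"
          using less.IH[of "N-i" i] False iN by simp
        finally have C: "Cs q N i = ?X^(i*i) * (?X^(N-i) * qb ?X (N-1) (N-i) / poch ?X i)" .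
        have e: "i*i + (N-i) = N + i*(N-1+i-N)" using j iN by (simp add: algebra_simps)
        have pe: "?X^(i*i) * ?X^(N-i) = ?X^N * ?X^(i*(N-1+i-N))"
          using e by (metis power_add)
        have qM: "qb ?X M i = poch ?X M / (poch ?X i * poch ?X (M-i))" using iN by (simp add: qb_def)
        have nz: "poch ?X M \<noteq> 0" "poch ?X i \<noteq> 0" "poch ?X (M-i) \<noteq> 0"
          using poch_pos[OF X0 X1] by (auto simp: less_le)
        show ?thesis unfolding C by (rule alg1[OF nz qM pe])
      qed
    qed
    also have "\<dots> = ?X^N * (\<Sum>a\<le>min M N. ?u a) / poch ?X M"
      by (simp add: sum_distrib_left sum_divide_distrib)
    also have "(\<Sum>a\<le>min M N. ?u a) = (\<Sum>a\<le>N. ?u a)"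
      by (rule sum.mono_neutral_left) auto
    also have "\<dots> = qb ?X (M + (N-1)) N" using vandermonde[OF X0 X1, of M "N-1" N] by simp
    also have "M + (N-1) = N + M - 1" using N1 by simp
    finally show ?thesis .
  qed
qed

lemma gprod: "(\<Prod>s=1..k. 1 - q^s) = (-1)^k * q^tri (Suc k) * poch (1/q) k"
proof (induction k)
  case 0 then show ?case by simp
next
  case (Suc k)
  have "(\<Prod>s=1..Suc k. 1 - q^s) = (\<Prod>s=1..k. 1 - q^s) * (1 - q^Suc k)"
    by (simp add: prod.nat_ivl_Suc' mult.commute)
  also have "\<dots> = (-1)^k * q^tri (Suc k) * poch (1/q) k * (- (q^Suc k * (1 - (1/q)^Suc k)))"
    using Suc.IH alg3[of q k] q1 by simp
  also have "\<dots> = (-1)^Suc k * (q^tri (Suc k) * q^Suc k) * (poch (1/q) k * (1 - (1/q)^Suc k))"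
    by (simp only: power_Suc) (simp add: algebra_simps)
  also have "q^tri (Suc k) * q^Suc k = q^tri (Suc (Suc k))" by (simp only: tri.simps(2) power_add)
  also have "poch (1/q) k * (1 - (1/q)^Suc k) = poch (1/q) (Suc k)" by (simp only: poch_Suc)
  finally show ?case .
qed

lemma term_eq:
  assumes "1 \<le> m" "m \<le> n"
  shows "(\<Prod>s=1..m-1. 1 - q^s) * Cs q n m
    = (1/q)^n / (1 - (1/q)^n) * - ((-1)^m * (1/q)^tri m * qb (1/q) n m)"
proof -
  let ?X = "1/q"
  obtain k where k: "m = Suc k" using assms by (cases m) auto
  obtain d where d: "n = m + d" using assms le_Suc_ex by blast
  have g: "(\<Prod>s=1..m-1. 1 - q^s) = (-1)^k * q^tri m * poch ?X k" using gprod[of k] k by simp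
  have pm: "poch ?X m = poch ?X k * (1 - ?X^m)" using k poch_Suc by simp
  have pn: "poch ?X n = poch ?X (k+d) * (1 - ?X^n)" using k d poch_Suc[of ?X "k+d"] by simp
  have "Cs q n m = ?X^(m*m) * Es q d m" using C_col[OF assms(2)] d by simp
  also have "Es q d m = ?X^d * qb ?X (k+d) d / poch ?X m"
  proof -
    have "Es q d m = ?X^d * qb ?X (d+m-1) d / poch ?X m" by (rule E_closed)
    moreover have "d + m - 1 = k + d" using k by simp
    ultimately show ?thesis by simp
  qed
  also have "qb ?X (k+d) d = poch ?X (k+d) / (poch ?X d * poch ?X k)" by (simp add: qb_def)
  finally have C: "Cs q n m = ?X^(m*m) * (?X^d * (poch ?X (k+d) / (poch ?X d * poch ?X k)) / (poch ?X k * (1 - ?X^m)))"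
    using pm by simp
  have Q: "qb ?X n m = poch ?X (k+d) * (1 - ?X^n) / (poch ?X k * (1 - ?X^m) * poch ?X d)"
    using pm pn d by (simp add: qb_def)
  have "m * m = tri m + tri m + m" using tri2[of m] k by simp
  then have h1: "?X^(m*m) * ?X^d = ?X^tri m * ?X^tri m * ?X^n" using d by (simp add: power_add)
  have h2: "q^tri m * ?X^tri m = 1" using q1 by (simp add: power_one_over)
  have "q^tri m * (?X^(m*m) * ?X^d) = q^tri m * (?X^tri m * ?X^tri m * ?X^n)" by (simp only: h1)
  also have "\<dots> = (q^tri m * ?X^tri m) * (?X^n * ?X^tri m)" by (simp only: ac_simps)
  finally have pw: "q^tri m * (?X^(m*m) * ?X^d) = ?X^n * ?X^tri m" by (simp only: h2 mult_1_left)
  have nz: "poch ?X k \<noteq> 0" "poch ?X d \<noteq> 0" using poch_pos[OF X0 X1] by (auto simp: less_le)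
  have "?X^m < 1" using xpow_lt1[OF X0 X1, of k] k by simp
  moreover have "?X^n < 1" using xpow_lt1[OF X0 X1, of "k+d"] k d by simp
  ultimately have nz2: "1 - ?X^m \<noteq> 0" "1 - ?X^n \<noteq> 0" by auto
  have sm: "(-1::real)^m = - ((-1)^k)" using k by simp
  show ?thesis unfolding g C Q by (rule alg2[OF nz(1) nz(2) nz2(1) nz2(2) pw sm])
qed

lemma main_sum:
  assumes "1 \<le> n"
  shows "(\<Sum>la\<in>partitions_of n. (\<Prod>s=1..length la - 1. (1 - q ^ s)) / a_part la q) = 1 / (q ^ n - 1)"
proof -
  let ?X = "1/q"
  let ?f = "\<lambda>m. (\<Prod>s=1..m - 1. (1 - q ^ s))"
  let ?c = "?X^n / (1 - ?X^n)"
  let ?h = "\<lambda>m. (-1)^m * ?X^tri m * qb ?X n m"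
  have "(\<Sum>la\<in>partitions_of n. ?f (length la) / a_part la q) = (\<Sum>la\<in>partitions_of n. ?f (length la) * w q la)"
    by (simp add: w_def)
  also have "\<dots> = (\<Sum>m\<le>n. ?f m * Cs q n m)" by (rule total_split)
  also have "\<dots> = (\<Sum>m\<le>n. ?c * ((if m = 0 then 1 else 0) - ?h m))"
  proof (rule sum.cong[OF refl])
    fix m assume "m \<in> {..n}"
    then have mn: "m \<le> n" by simp
    show "?f m * Cs q n m = ?c * ((if m = 0 then 1 else 0) - ?h m)"
    proof (cases "m = 0")
      case True
      then show ?thesis using C_n0[OF assms, of q] qb_0[OF X0 X1, of n] by simp
    next
      case False
      then have "1 \<le> m" by simp
      then show ?thesis using term_eq[OF _ mn] False by simp
    qed
  qed
  also have "\<dots> = ?c * (\<Sum>m\<le>n. (if m = 0 then 1 else 0)) - ?c * (\<Sum>m\<le>n. ?h m)"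
    by (simp only: sum_subtractf sum_distrib_left right_diff_distrib)
  also have "(\<Sum>m\<le>n. ?h m) = 0" using gauss_zero[OF X0 X1 assms] .
  also have "(\<Sum>m\<le>n. (if m = 0 then 1 else 0::real)) = 1" by simp
  also have "?c * 1 - ?c * 0 = 1 / (q^n - 1)"
  proof -
    have "q^n > 1" using q1 assms by (simp add: one_less_power)
    moreover have "q \<noteq> 0" using q1 by simp
    ultimately show ?thesis by (simp add: power_one_over field_simps)
  qed
  finally show ?thesis .
qed

end


theorem lemma6p2:
  fixes q n :: nat
  assumes "\<exists>p k. prime p \<and> 0 < k \<and> q = p ^ k"
    and "1 \<le> n"
  shows "(\<Sum>la\<in>partitions_of n.
            (\<Prod>s=1..length la - 1. (1 - real q ^ s)) / a_part la (real q))
         = 1 / (real q ^ n - 1)"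
proof -
  obtain p k where pk: "prime p" "0 < k" "q = p ^ k" using assms(1) by blast
  have "2 \<le> p" using pk(1) prime_ge_2_nat by blast
  moreover have "p \<le> p ^ k" using pk(2) \<open>2 \<le> p\<close> by (simp add: self_le_power)
  ultimately have "2 \<le> q" using pk(3) by simp
  then have "1 < real q" by simp
  then show ?thesis using main_sum[of "real q" n] assms(2) by simp
qed

end
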